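(* Let $\sigma(x,y)=(x\rightharpoonup y,x\leftharpoonup y)$ be a right-non-degenerate involutive quiver-theoretic Yang--Baxter map on a quiver $\mathscr{A}$ over $\Lambda$. For $x,y\in\mathscr{A}$ with $\mathfrak{t}(x)=\mathfrak{t}(y)$ set $x\bullet y:=(\cdot\leftharpoonup x)^{-1}(y)$. Then $(\mathscr{A},\bullet)$ is a left-non-degenerate weak co-RC-system, and $x\bullet y$ is defined whenever $\mathfrak{t}(x)=\mathfrak{t}(y)$.
   Context: A quiver over $\Lambda$ has source/target maps $\mathfrak{s},\mathfrak{t}$; $Q(\lambda,\Lambda)$ (resp. $Q(\Lambda,\mu)$) denotes arrows with source $\lambda$ (resp. target $\mu$). A quiver-theoretic Yang--Baxter map is a source/target-preserving map $\sigma$ on composable pairs $\mathscr{A}\otimes\mathscr{A}$ satisfying the braid relation $(\sigma\otimes\mathrm{id})(\mathrm{id}\otimes\sigma)(\sigma\otimes\mathrm{id})=(\mathrm{id}\otimes\sigma)(\sigma\otimes\mathrm{id})(\mathrm{id}\otimes\sigma)$; involutive: $\sigma^2=\mathrm{id}$; right-non-degenerate: each $\cdot\leftharpoonup y\colon\mathscr{A}(\Lambda,\mathfrak{s}(y))\to\mathscr{A}(\Lambda,\mathfrak{t}(y))$ is bijective. A weak co-RC-system $(Q,\bullet)$ is a quiver $Q$ with a partially defined binary operation $\bullet$ such that: $x\bullet y$ is defined only if $\mathfrak{t}(x)=\mathfrak{t}(y)$; whenever $x\bullet y$ is defined, $y\bullet x$ is defined, $\mathfrak{t}(x\bullet y)=\mathfrak{s}(x)$,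 $\mathfrak{t}(y\bullet x)=\mathfrak{s}(y)$, $\mathfrak{s}(x\bullet y)=\mathfrak{s}(y\bullet x)$; and whenever $x\bullet y$, $x\bullet z$, $(x\bullet y)\bullet(x\bullet z)$ are defined, then $y\bullet z$ and $(y\bullet x)\bullet(y\bullet z)$ are defined and $(x\bullet y)\bullet(x\bullet z)=(y\bullet x)\bullet(y\bullet z)$. It is left-non-degenerate if every map $x\bullet\cdot\colon Q(\Lambda,\mathfrak{t}(x))\to Q(\Lambda,\mathfrak{s}(x))$ is a bijection. *)

theory Defs
  imports Main
begin

text \<open>A quiver is given by a carrier set of arrows A and source/target maps s, t
(the vertex set Lambda is the type 'v). Composable pairs x (x) y: t x = s y.\<close>

definition composable :: "'a set \<Rightarrow> ('a \<Rightarrow> 'v) \<Rightarrow> ('a \<Rightarrow> 'v) \<Rightarrow> ('a \<times> 'a) set" where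
  "composable A s t = {(x, y). x \<in> A \<and> y \<in> A \<and> t x = s y}"

definition composable3 :: "'a set \<Rightarrow> ('a \<Rightarrow> 'v) \<Rightarrow> ('a \<Rightarrow> 'v) \<Rightarrow> ('a \<times> 'a \<times> 'a) set" where
  "composable3 A s t = {(x, y, z). x \<in> A \<and> y \<in> A \<and> z \<in> A \<and> t x = s y \<and> t y = s z}"

definition sig12 :: "('a \<times> 'a \<Rightarrow> 'a \<times> 'a) \<Rightarrow> 'a \<times> 'a \<times> 'a \<Rightarrow> 'a \<times> 'a \<times> 'a" where
  "sig12 \<sigma> = (\<lambda>(x, y, z). (fst (\<sigma> (x, y)), snd (\<sigma> (x, y)), z))"

definition sig23 :: "('a \<times> 'a \<Rightarrow> 'a \<times> 'a) \<Rightarrow> 'a \<times> 'a \<times> 'a \<Rightarrow> 'a \<times> 'a \<times> 'a" where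
  "sig23 \<sigma> = (\<lambda>(x, y, z). (x, fst (\<sigma> (y, z)), snd (\<sigma> (y, z))))"

text \<open>Quiver-theoretic Yang--Baxter map: sigma(x,y) = (x \<rightharpoonup> y, x \<leftharpoonup> y) on
composable pairs, preserving sources/targets: s(x\<rightharpoonup>y) = s x,
t(x\<rightharpoonup>y) = s(x\<leftharpoonup>y), t(x\<leftharpoonup>y) = t y; braid relation on composable triples.\<close>

definition quiver_YB_map :: "'a set \<Rightarrow> ('a \<Rightarrow> 'v) \<Rightarrow> ('a \<Rightarrow> 'v) \<Rightarrow> ('a \<times> 'a \<Rightarrow> 'a \<times> 'a) \<Rightarrow> bool" where
  "quiver_YB_map A s t \<sigma> \<longleftrightarrow>
     (\<forall>(x, y) \<in> composable A s t.
        \<sigma> (x, y) \<in> composable A s t \<and>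
        s (fst (\<sigma> (x, y))) = s x \<and> t (snd (\<sigma> (x, y))) = t y) \<and>
     (\<forall>p \<in> composable3 A s t.
        sig12 \<sigma> (sig23 \<sigma> (sig12 \<sigma> p)) = sig23 \<sigma> (sig12 \<sigma> (sig23 \<sigma> p)))"

definition involutive_YB :: "'a set \<Rightarrow> ('a \<Rightarrow> 'v) \<Rightarrow> ('a \<Rightarrow> 'v) \<Rightarrow> ('a \<times> 'a \<Rightarrow> 'a \<times> 'a) \<Rightarrow> bool" where
  "involutive_YB A s t \<sigma> \<longleftrightarrow> (\<forall>p \<in> composable A s t. \<sigma> (\<sigma> p) = p)"

definition right_nondeg_YB :: "'a set \<Rightarrow> ('a \<Rightarrow> 'v) \<Rightarrow> ('a \<Rightarrow> 'v) \<Rightarrow> ('a \<times> 'a \<Rightarrow> 'a \<times> 'a) \<Rightarrow> bool" where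
  "right_nondeg_YB A s t \<sigma> \<longleftrightarrow>
     (\<forall>y \<in> A. bij_betw (\<lambda>x. snd (\<sigma> (x, y))) {x \<in> A. t x = s y} {w \<in> A. t w = t y})"

text \<open>Partial binary operation on the arrows A, encoded with option
(None = undefined; defined values only for arguments in A, results in A).\<close>

definition weak_coRC :: "'a set \<Rightarrow> ('a \<Rightarrow> 'v) \<Rightarrow> ('a \<Rightarrow> 'v) \<Rightarrow> ('a \<Rightarrow> 'a \<Rightarrow> 'a option) \<Rightarrow> bool" where
  "weak_coRC A s t op \<longleftrightarrow>
     (\<forall>x y. op x y \<noteq> None \<longrightarrow> x \<in> A \<and> y \<in> A \<and> the (op x y) \<in> A) \<and>
     (\<forall>x \<in> A. \<forall>y \<in> A. op x y \<noteq> None \<longrightarrow> t x = t y) \<and>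
     (\<forall>x \<in> A. \<forall>y \<in> A. op x y \<noteq> None \<longrightarrow>
        op y x \<noteq> None \<and>
        t (the (op x y)) = s x \<and> t (the (op y x)) = s y \<and>
        s (the (op x y)) = s (the (op y x))) \<and>
     (\<forall>x \<in> A. \<forall>y \<in> A. \<forall>z \<in> A.
        op x y \<noteq> None \<and> op x z \<noteq> None \<and> op (the (op x y)) (the (op x z)) \<noteq> None \<longrightarrow>
        op y z \<noteq> None \<and> op (the (op y x)) (the (op y z)) \<noteq> None \<and>
        op (the (op x y)) (the (op x z)) = op (the (op y x)) (the (op y z)))"

definition left_nondeg_coRC :: "'a set \<Rightarrow> ('a \<Rightarrow> 'v) \<Rightarrow> ('a \<Rightarrow> 'v) \<Rightarrow> ('a \<Rightarrow> 'a \<Rightarrow> 'a option) \<Rightarrow> bool" where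
  "left_nondeg_coRC A s t op \<longleftrightarrow>
     (\<forall>x \<in> A. (\<forall>y \<in> A. t y = t x \<longrightarrow> op x y \<noteq> None) \<and>
        bij_betw (\<lambda>y. the (op x y)) {y \<in> A. t y = t x} {w \<in> A. t w = s x})"

definition yb_bullet :: "'a set \<Rightarrow> ('a \<Rightarrow> 'v) \<Rightarrow> ('a \<Rightarrow> 'v) \<Rightarrow> ('a \<times> 'a \<Rightarrow> 'a \<times> 'a) \<Rightarrow> 'a \<Rightarrow> 'a \<Rightarrow> 'a option" where
  "yb_bullet A s t \<sigma> x y =
     (if x \<in> A \<and> y \<in> A \<and> t x = t y
      then Some (inv_into {z \<in> A. t z = s x} (\<lambda>z. snd (\<sigma> (z, x))) y)
      else None)"

end

theory Submission
  imports Defs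
begin

lemma yb_comp:
  assumes "quiver_YB_map A s t \<sigma>" "x \<in> A" "y \<in> A" "t x = s y"
  shows "fst (\<sigma> (x,y)) \<in> A" "snd (\<sigma> (x,y)) \<in> A"
    "t (fst (\<sigma> (x,y))) = s (snd (\<sigma> (x,y)))"
    "s (fst (\<sigma> (x,y))) = s x" "t (snd (\<sigma> (x,y))) = t y"
proof -
  have m: "(x,y) \<in> composable A s t" using assms unfolding composable_def by simp
  have h: "\<sigma> (x, y) \<in> composable A s t \<and> s (fst (\<sigma> (x, y))) = s x \<and> t (snd (\<sigma> (x, y))) = t y"
    using assms(1) m unfolding quiver_YB_map_def by fast
  then show "fst (\<sigma> (x,y)) \<in> A" "snd (\<sigma> (x,y)) \<in> A"
    "t (fst (\<sigma> (x,y))) = s (snd (\<sigma> (x,y)))"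
    "s (fst (\<sigma> (x,y))) = s x" "t (snd (\<sigma> (x,y))) = t y"
    unfolding composable_def by (auto simp: case_prod_beta)
qed

lemma yb_braid:
  assumes "quiver_YB_map A s t \<sigma>" "x \<in> A" "y \<in> A" "z \<in> A" "t x = s y" "t y = s z"
  shows "sig12 \<sigma> (sig23 \<sigma> (sig12 \<sigma> (x,y,z))) = sig23 \<sigma> (sig12 \<sigma> (sig23 \<sigma> (x,y,z)))"
proof -
  have m: "(x,y,z) \<in> composable3 A s t" using assms unfolding composable3_def by simp
  show ?thesis using assms(1) m unfolding quiver_YB_map_def by fast
qed
lemma bullet_some:
  assumes "right_nondeg_YB A s t \<sigma>" "x \<in> A" "y \<in> A" "t x = t y"
  shows "\<exists>z. yb_bullet A s t \<sigma> x y = Some z \<and> z \<in> A \<and> t z = s x \<and> snd (\<sigma> (z, x)) = y"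
proof -
  have b: "bij_betw (\<lambda>z. snd (\<sigma> (z, x))) {z \<in> A. t z = s x} {w \<in> A. t w = t x}"
    using assms unfolding right_nondeg_YB_def by blast
  have yin: "y \<in> (\<lambda>z. snd (\<sigma> (z, x))) ` {z \<in> A. t z = s x}"
    using b assms unfolding bij_betw_def by auto
  let ?z = "inv_into {z \<in> A. t z = s x} (\<lambda>z. snd (\<sigma> (z, x))) y"
  have "?z \<in> {z \<in> A. t z = s x}" by (rule inv_into_into[OF yin])
  moreover have "snd (\<sigma> (?z, x)) = y" using f_inv_into_f[OF yin] by simp
  ultimately show ?thesis using assms unfolding yb_bullet_def by auto
qed

lemma bullet_unique:
  assumes "right_nondeg_YB A s t \<sigma>" "x \<in> A" "w \<in> A" "t w = s x" "snd (\<sigma> (w, x)) = y"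
  shows "yb_bullet A s t \<sigma> x y = Some w"
proof -
  have b: "bij_betw (\<lambda>z. snd (\<sigma> (z, x))) {z \<in> A. t z = s x} {w \<in> A. t w = t x}"
    using assms unfolding right_nondeg_YB_def by blast
  have "y \<in> {w \<in> A. t w = t x}" using b assms unfolding bij_betw_def by auto
  moreover have "inv_into {z \<in> A. t z = s x} (\<lambda>z. snd (\<sigma> (z, x))) y = w"
    using inv_into_f_f[of "\<lambda>z. snd (\<sigma> (z, x))" "{z \<in> A. t z = s x}" w] b assms
    unfolding bij_betw_def by auto
  ultimately show ?thesis using assms unfolding yb_bullet_def by auto
qed

theorem proposition5p2:
  fixes A :: "'a set" and s t :: "'a \<Rightarrow> 'v" and \<sigma> :: "'a \<times> 'a \<Rightarrow> 'a \<times> 'a"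
  assumes "quiver_YB_map A s t \<sigma>"
    and "involutive_YB A s t \<sigma>"
    and "right_nondeg_YB A s t \<sigma>"
  shows "weak_coRC A s t (yb_bullet A s t \<sigma>)
       \<and> left_nondeg_coRC A s t (yb_bullet A s t \<sigma>)
       \<and> (\<forall>x \<in> A. \<forall>y \<in> A. t x = t y \<longrightarrow> yb_bullet A s t \<sigma> x y \<noteq> None)"
proof -
  note Q = assms(1) and I = assms(2) and RN = assms(3)
  let ?b = "yb_bullet A s t \<sigma>"
  have dom: "?b x y \<noteq> None \<Longrightarrow> x \<in> A \<and> y \<in> A \<and> t x = t y" for x y
    unfolding yb_bullet_def by (auto split: if_splits)
  have ex: "x \<in> A \<Longrightarrow> y \<in> A \<Longrightarrow> t x = t y \<Longrightarrow>
      \<exists>z. ?b x y = Some z \<and> z \<in> A \<and> t z = s x \<and> snd (\<sigma> (z, x)) = y" for x y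
    using bullet_some[OF RN] by blast
  have key: "x \<in> A \<Longrightarrow> y \<in> A \<Longrightarrow> t x = t y \<Longrightarrow>
      \<sigma> (the (?b x y), x) = (the (?b y x), y) \<and> the (?b y x) \<in> A \<and> t (the (?b y x)) = s y
      \<and> s (the (?b x y)) = s (the (?b y x))" for x y
  proof -
    assume xA: "x \<in> A" and yA: "y \<in> A" and txy: "t x = t y"
    obtain z where z: "?b x y = Some z" "z \<in> A" "t z = s x" "snd (\<sigma> (z, x)) = y"
      using ex[OF xA yA txy] by blast
    define u where "u = fst (\<sigma> (z, x))"
    have uA: "u \<in> A" and tu: "t u = s y" and su: "s u = s z"
      using yb_comp[OF Q z(2) xA z(3)] z(4) unfolding u_def by auto
    have sz: "\<sigma> (z, x) = (u, y)" using z(4) u_def by (simp add: prod_eq_iff)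
    have zc: "(z, x) \<in> composable A s t" unfolding composable_def using z xA by simp
    have "\<sigma> (\<sigma> (z, x)) = (z, x)" using I zc unfolding involutive_YB_def by blast
    hence inv: "\<sigma> (u, y) = (z, x)" using sz by simp
    have "?b y x = Some u" using bullet_unique[OF RN yA uA tu] inv by simp
    thus ?thesis using z sz uA tu su by simp
  qed
  have total: "\<forall>x \<in> A. \<forall>y \<in> A. t x = t y \<longrightarrow> ?b x y \<noteq> None"
    using ex by fastforce
  have c1: "\<forall>x y. ?b x y \<noteq> None \<longrightarrow> x \<in> A \<and> y \<in> A \<and> the (?b x y) \<in> A"
    using dom ex by fastforce
  have c2: "\<forall>x \<in> A. \<forall>y \<in> A. ?b x y \<noteq> None \<longrightarrow> t x = t y" using dom by blast
  have c3: "\<forall>x \<in> A. \<forall>y \<in> A. ?b x y \<noteq> None \<longrightarrow>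
        ?b y x \<noteq> None \<and>
        t (the (?b x y)) = s x \<and> t (the (?b y x)) = s y \<and>
        s (the (?b x y)) = s (the (?b y x))"
  proof (intro ballI impI)
    fix x y assume xA: "x \<in> A" and yA: "y \<in> A" and d: "?b x y \<noteq> None"
    have txy: "t x = t y" using dom d by blast
    show "?b y x \<noteq> None \<and>
        t (the (?b x y)) = s x \<and> t (the (?b y x)) = s y \<and>
        s (the (?b x y)) = s (the (?b y x))"
      using key[OF xA yA txy] ex[OF xA yA txy] total xA yA txy by auto
  qed
  have c4: "\<forall>x \<in> A. \<forall>y \<in> A. \<forall>z \<in> A.
        ?b x y \<noteq> None \<and> ?b x z \<noteq> None \<and> ?b (the (?b x y)) (the (?b x z)) \<noteq> None \<longrightarrow>
        ?b y z \<noteq> None \<and> ?b (the (?b y x)) (the (?b y z)) \<noteq> None \<and>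
        ?b (the (?b x y)) (the (?b x z)) = ?b (the (?b y x)) (the (?b y z))"
  proof (intro ballI impI)
    fix x y z assume xA: "x \<in> A" and yA: "y \<in> A" and zA: "z \<in> A"
      and d: "?b x y \<noteq> None \<and> ?b x z \<noteq> None \<and> ?b (the (?b x y)) (the (?b x z)) \<noteq> None"
    have txy: "t x = t y" and txz: "t x = t z" using dom d by blast+
    have tyz: "t y = t z" using txy txz by simp
    obtain a where a: "?b x y = Some a" "a \<in> A" "t a = s x" "snd (\<sigma> (a, x)) = y"
      using ex[OF xA yA txy] by blast
    obtain b where b: "?b x z = Some b" "b \<in> A" "t b = s x" "snd (\<sigma> (b, x)) = z"
      using ex[OF xA zA txz] by blast
    obtain c where c: "?b a b = Some c" "c \<in> A" "t c = s a" "snd (\<sigma> (c, a)) = b"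
      using ex[OF a(2) b(2)] a b by auto
    obtain yx where yx: "?b y x = Some yx" using total xA yA txy by fastforce
    obtain yz where yz: "?b y z = Some yz" "yz \<in> A" "t yz = s y" "snd (\<sigma> (yz, y)) = z"
      using ex[OF yA zA tyz] by blast
    obtain zx where zx: "?b z x = Some zx" using total xA zA txz by fastforce
    obtain ba where ba: "?b b a = Some ba" using total a b by fastforce
    have kxy: "\<sigma> (a, x) = (yx, y)" "yx \<in> A" "t yx = s y" "s a = s yx"
      using key[OF xA yA txy] a yx by auto
    have kxz: "\<sigma> (b, x) = (zx, z)" "zx \<in> A"
      using key[OF xA zA txz] b zx by auto
    have kab: "\<sigma> (c, a) = (ba, b)"
      using key[OF a(2) b(2)] a b c ba by auto
    have br: "sig12 \<sigma> (sig23 \<sigma> (sig12 \<sigma> (c,a,x))) = sig23 \<sigma> (sig12 \<sigma> (sig23 \<sigma> (c,a,x)))"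
      using yb_braid[OF Q c(2) a(2) xA c(3) a(3)] .
    define P where "P = fst (\<sigma> (c, yx))"
    define R where "R = snd (\<sigma> (c, yx))"
    have scy: "\<sigma> (c, yx) = (P, R)" unfolding P_def R_def by simp
    have RA: "R \<in> A" and tR: "t R = s y"
      using yb_comp[OF Q c(2) kxy(2)] c(3) kxy unfolding R_def by auto
    have "(snd (\<sigma> (ba, zx)), z) = \<sigma> (R, y)"
      using br kxy(1) kxz(1) kab scy unfolding sig12_def sig23_def
      by (simp split: prod.splits)
    hence "snd (\<sigma> (R, y)) = z" by (metis snd_conv)
    hence "?b y z = Some R" using bullet_unique[OF RN yA RA tR] by simp
    hence Ryz: "R = yz" using yz by simp
    have "?b yx yz = Some c"
      using bullet_unique[OF RN kxy(2) c(2)] c(3) kxy(4) scy Ryz by simp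
    thus "?b y z \<noteq> None \<and> ?b (the (?b y x)) (the (?b y z)) \<noteq> None \<and>
        ?b (the (?b x y)) (the (?b x z)) = ?b (the (?b y x)) (the (?b y z))"
      using yz yx a b c by simp
  qed
  have ln: "left_nondeg_coRC A s t ?b"
    unfolding left_nondeg_coRC_def
  proof (rule ballI, rule conjI)
    fix x assume xA: "x \<in> A"
    show "\<forall>y\<in>A. t y = t x \<longrightarrow> ?b x y \<noteq> None" using total xA by auto
    have bj: "bij_betw (\<lambda>z. snd (\<sigma> (z, x))) {z \<in> A. t z = s x} {w \<in> A. t w = t x}"
      using RN xA unfolding right_nondeg_YB_def by blast
    have inv_b: "bij_betw (inv_into {z \<in> A. t z = s x} (\<lambda>z. snd (\<sigma> (z, x)))) {w \<in> A. t w = t x} {z \<in> A. t z = s x}"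
      using bij_betw_inv_into[OF bj] .
    have eq: "\<And>y. y \<in> {w \<in> A. t w = t x} \<Longrightarrow>
       the (?b x y) = inv_into {z \<in> A. t z = s x} (\<lambda>z. snd (\<sigma> (z, x))) y"
      using xA by (simp add: yb_bullet_def)
    show "bij_betw (\<lambda>y. the (?b x y)) {y \<in> A. t y = t x} {w \<in> A. t w = s x}"
      using inv_b by (simp only: bij_betw_cong[OF eq])
  qed
  show ?thesis using c1 c2 c3 c4 ln total unfolding weak_coRC_def by blast
qed

end
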